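(* Let $f$ be a pairwise social choice correspondence that satisfies strong Condorcet-consistency, homogeneity, and strategyproofness. If $\mathrm{TC}(R)\subseteq f(R)$ for all profiles $R$, then $f$ is a robust dominant set rule.
   Context: Let $A$ be a finite set of alternatives; a preference profile $R$ assigns a strict total order $\succ_i$ on $A$ to each voter $i$ of a finite non-empty electorate $N\subseteq\{1,2,\dots\}$; $\mathcal{R}^*(A)$ is the set of all profiles over all electorates. $g_R(x,y)=|\{i: x\succ_i y\}|-|\{i: y\succ_i x\}|$; $x\succsim_R y$ iff $g_R(x,y)\ge0$, with strict part $\succ_R$. A Condorcet winner is $x$ with $x\succ_R y$ for all $y\ne x$. A non-empty $X$ is dominant in $R$ if $x\succ_R y$ for all $x\in X,y\notin X$; $\mathrm{TC}(R)$ is the inclusion-smallest dominant set. An SCC is $f:\mathcal{R}^*(A)\to 2^A\setminus\{\emptyset\}$; pairwise: $f(R)=f(R')$ whenever $g_R=g_{R'}$; homogeneous: $f(kR)=f(R)$ where $kR$ is $k$ copies of $R$; strongly Condorcet-consistent: $f(R)=\{x\}$ iff $x$ is the Condorcet winner in $R$. Fishburn's extension: for $X\ne Y$, $X\succ_i^F Y$ iff $x\succ_i y$ for all $x\in X\setminus Y,y\in Y$ and for all $x\in X,y\in Y\setminus X$; $f$ is strategyproof if no voter $i$ can change only his own preference to move from $R$ to $R'$ with $f(R')\succ_i^F f(R)$. $f$ is a dominant set rule if $f(R)$ is dominant in $R$ for all $R$; it is robust if $f(R')\subseteq f(R)$ whenever $f(R)$ is dominant in $R'$. *)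

theory Defs
  imports Main
begin

text \<open>Preferences: a strict total order on the finite alternative set A, as a relation
  (x,y) \<in> r meaning x is strictly preferred to y.\<close>
definition strict_total_order :: "'a set \<Rightarrow> ('a \<times> 'a) set \<Rightarrow> bool" where
  "strict_total_order A r \<longleftrightarrow> r \<subseteq> A \<times> A \<and> irrefl r \<and> trans r \<and>
     (\<forall>x\<in>A. \<forall>y\<in>A. x \<noteq> y \<longrightarrow> (x, y) \<in> r \<or> (y, x) \<in> r)"

text \<open>A profile is a partial map from voters (positive naturals) to preferences;
  its electorate is the domain of the map.\<close>
type_synonym 'a profile = "nat \<Rightarrow> ('a \<times> 'a) set option"

definition is_profile :: "'a set \<Rightarrow> 'a profile \<Rightarrow> bool" where
  "is_profile A R \<longleftrightarrow> finite (dom R) \<and> dom R \<noteq> {} \<and> 0 \<notin> dom R \<and>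
     (\<forall>i\<in>dom R. strict_total_order A (the (R i)))"

definition prefers :: "'a profile \<Rightarrow> nat \<Rightarrow> 'a \<Rightarrow> 'a \<Rightarrow> bool" where
  "prefers R i x y \<longleftrightarrow> (\<exists>r. R i = Some r \<and> (x, y) \<in> r)"

definition margin :: "'a profile \<Rightarrow> 'a \<Rightarrow> 'a \<Rightarrow> int" where
  "margin R x y = int (card {i\<in>dom R. prefers R i x y}) - int (card {i\<in>dom R. prefers R i y x})"

definition condorcet_winner :: "'a set \<Rightarrow> 'a profile \<Rightarrow> 'a \<Rightarrow> bool" where
  "condorcet_winner A R x \<longleftrightarrow> x \<in> A \<and> (\<forall>y\<in>A. y \<noteq> x \<longrightarrow> margin R x y > 0)"

definition dominant :: "'a set \<Rightarrow> 'a profile \<Rightarrow> 'a set \<Rightarrow> bool" where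
  "dominant A R X \<longleftrightarrow> X \<noteq> {} \<and> X \<subseteq> A \<and> (\<forall>x\<in>X. \<forall>y\<in>A - X. margin R x y > 0)"

definition TC :: "'a set \<Rightarrow> 'a profile \<Rightarrow> 'a set" where
  "TC A R = (THE X. dominant A R X \<and> (\<forall>Y. dominant A R Y \<longrightarrow> X \<subseteq> Y))"

definition is_SCC :: "'a set \<Rightarrow> ('a profile \<Rightarrow> 'a set) \<Rightarrow> bool" where
  "is_SCC A f \<longleftrightarrow> (\<forall>R. is_profile A R \<longrightarrow> f R \<noteq> {} \<and> f R \<subseteq> A)"

definition pairwise_scc :: "'a set \<Rightarrow> ('a profile \<Rightarrow> 'a set) \<Rightarrow> bool" where
  "pairwise_scc A f \<longleftrightarrow> (\<forall>R R'. is_profile A R \<longrightarrow> is_profile A R' \<longrightarrow>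
     (\<forall>x\<in>A. \<forall>y\<in>A. margin R x y = margin R' x y) \<longrightarrow> f R = f R')"

definition copies :: "nat \<Rightarrow> 'a profile \<Rightarrow> 'a profile \<Rightarrow> bool" where
  "copies k R R' \<longleftrightarrow> (\<exists>\<pi>. \<pi> ` dom R' \<subseteq> dom R \<and>
     (\<forall>i\<in>dom R. card {j\<in>dom R'. \<pi> j = i} = k) \<and>
     (\<forall>j\<in>dom R'. R' j = R (\<pi> j)))"

definition homogeneous :: "'a set \<Rightarrow> ('a profile \<Rightarrow> 'a set) \<Rightarrow> bool" where
  "homogeneous A f \<longleftrightarrow> (\<forall>k R R'. k \<ge> 1 \<longrightarrow> is_profile A R \<longrightarrow> is_profile A R' \<longrightarrow>
     copies k R R' \<longrightarrow> f R' = f R)"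

definition strongly_condorcet_consistent :: "'a set \<Rightarrow> ('a profile \<Rightarrow> 'a set) \<Rightarrow> bool" where
  "strongly_condorcet_consistent A f \<longleftrightarrow> (\<forall>R x. is_profile A R \<longrightarrow>
     (f R = {x} \<longleftrightarrow> condorcet_winner A R x))"

definition fishburn :: "'a profile \<Rightarrow> nat \<Rightarrow> 'a set \<Rightarrow> 'a set \<Rightarrow> bool" where
  "fishburn R i X Y \<longleftrightarrow> X \<noteq> Y \<and>
     (\<forall>x\<in>X - Y. \<forall>y\<in>Y. prefers R i x y) \<and> (\<forall>x\<in>X. \<forall>y\<in>Y - X. prefers R i x y)"

definition strategyproof :: "'a set \<Rightarrow> ('a profile \<Rightarrow> 'a set) \<Rightarrow> bool" where
  "strategyproof A f \<longleftrightarrow> (\<forall>R R' i. is_profile A R \<longrightarrow> is_profile A R' \<longrightarrow>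
     i \<in> dom R \<longrightarrow> dom R' = dom R \<longrightarrow> (\<forall>j. j \<noteq> i \<longrightarrow> R' j = R j) \<longrightarrow>
     \<not> fishburn R i (f R') (f R))"

definition dominant_set_rule :: "'a set \<Rightarrow> ('a profile \<Rightarrow> 'a set) \<Rightarrow> bool" where
  "dominant_set_rule A f \<longleftrightarrow> (\<forall>R. is_profile A R \<longrightarrow> dominant A R (f R))"

definition robust :: "'a set \<Rightarrow> ('a profile \<Rightarrow> 'a set) \<Rightarrow> bool" where
  "robust A f \<longleftrightarrow> (\<forall>R R'. is_profile A R \<longrightarrow> is_profile A R' \<longrightarrow>
     dominant A R' (f R) \<longrightarrow> f R' \<subseteq> f R)"

end

theory Submission
  imports Defs
begin


definition cc :: "('a \<times> 'a) set \<Rightarrow> 'a \<Rightarrow> 'a \<Rightarrow> int" where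
  "cc s x y = (if (x,y) \<in> s then 1 else 0) - (if (y,x) \<in> s then 1 else 0)"

definition dd :: "'a \<Rightarrow> 'a \<Rightarrow> 'a \<Rightarrow> 'a \<Rightarrow> int" where
  "dd a b u v = (if u = a \<and> v = b then 2 else if u = b \<and> v = a then -2 else 0)"

definition ordk :: "'a set \<Rightarrow> ('a \<Rightarrow> nat) \<Rightarrow> ('a \<Rightarrow> nat) \<Rightarrow> ('a \<times> 'a) set" where
  "ordk A k h = {(u,v). u \<in> A \<and> v \<in> A \<and> (k u < k v \<or> (k u = k v \<and> h u < h v))}"

definition keyf :: "('a \<Rightarrow> nat) \<Rightarrow> 'a \<Rightarrow> 'a \<Rightarrow> 'a \<Rightarrow> nat" where
  "keyf blk a b z = (if z = b then 4 * min (blk a) (blk b) + 1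
     else if z = a then 4 * min (blk a) (blk b) + 2 else 4 * blk z)"

definition tot :: "'a set \<Rightarrow> 'a profile \<Rightarrow> nat" where
  "tot A R = (\<Sum>p\<in>A \<times> A. nat \<bar>margin R (fst p) (snd p)\<bar>)"

lemma margin_antisym: "margin R y x = - margin R x y"
  by (simp add: margin_def)

lemma card_pref_upd:
  assumes "finite (dom R)" "i \<notin> dom R"
  shows "card {k \<in> dom (R(i \<mapsto> s)). prefers (R(i \<mapsto> s)) k x y} =
         card {k \<in> dom R. prefers R k x y} + (if (x,y) \<in> s then 1 else 0)"
proof (cases "(x,y) \<in> s")
  case True
  have "{k \<in> dom (R(i \<mapsto> s)). prefers (R(i \<mapsto> s)) k x y} = insert i {k \<in> dom R. prefers R k x y}"
    using True assms(2) by (auto simp: prefers_def)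
  moreover have "finite {k \<in> dom R. prefers R k x y}" using assms(1) by simp
  moreover have "i \<notin> {k \<in> dom R. prefers R k x y}" using assms(2) by simp
  ultimately show ?thesis using True by simp
next
  case False
  have "{k \<in> dom (R(i \<mapsto> s)). prefers (R(i \<mapsto> s)) k x y} = {k \<in> dom R. prefers R k x y}"
    using False assms(2) by (auto simp: prefers_def)
  then show ?thesis using False by simp
qed

lemma margin_upd:
  assumes "finite (dom R)" "i \<notin> dom R"
  shows "margin (R(i \<mapsto> s)) x y = margin R x y + cc s x y"
  using card_pref_upd[OF assms, of s x y] card_pref_upd[OF assms, of s y x]
  by (simp add: margin_def cc_def)

lemma profile_upd:
  assumes "is_profile A R" "i \<notin> dom R" "i \<noteq> 0" "strict_total_order A s"
  shows "is_profile A (R(i \<mapsto> s))"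
  using assms by (auto simp: is_profile_def)

lemma fresh:
  assumes "is_profile A R"
  shows "Suc (Max (dom R)) \<notin> dom R" "Suc (Suc (Max (dom R))) \<notin> dom R"
proof -
  have f: "finite (dom R)" using assms by (simp add: is_profile_def)
  show "Suc (Max (dom R)) \<notin> dom R"
    using Max_ge[OF f] by (metis Suc_n_not_le_n)
  show "Suc (Suc (Max (dom R))) \<notin> dom R"
    using Max_ge[OF f] by (metis Suc_n_not_le_n le_SucI)
qed

lemma cc_conv: "cc (s\<inverse>) x y = - cc s x y"
  by (simp add: cc_def)

lemma sto_conv: "strict_total_order A s \<Longrightarrow> strict_total_order A (s\<inverse>)"
  unfolding strict_total_order_def irrefl_def trans_def by blast

lemma sto_ordk:
  assumes "inj_on h A"
  shows "strict_total_order A (ordk A k h)"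
  unfolding strict_total_order_def irrefl_def trans_def ordk_def
proof (intro conjI)
  show "\<forall>x\<in>A. \<forall>y\<in>A. x \<noteq> y \<longrightarrow> (x, y) \<in> {(u, v). u \<in> A \<and> v \<in> A \<and> (k u < k v \<or> k u = k v \<and> h u < h v)} \<or>
             (y, x) \<in> {(u, v). u \<in> A \<and> v \<in> A \<and> (k u < k v \<or> k u = k v \<and> h u < h v)}"
  proof (intro ballI impI)
    fix x y assume "x \<in> A" "y \<in> A" "x \<noteq> y"
    then have "h x \<noteq> h y" using assms by (auto dest: inj_onD)
    then show "(x, y) \<in> {(u, v). u \<in> A \<and> v \<in> A \<and> (k u < k v \<or> k u = k v \<and> h u < h v)} \<or>
             (y, x) \<in> {(u, v). u \<in> A \<and> v \<in> A \<and> (k u < k v \<or> k u = k v \<and> h u < h v)}"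
      using \<open>x \<in> A\<close> \<open>y \<in> A\<close> by auto
  qed
qed auto

lemma swap_cc:
  assumes "a \<in> A" "b \<in> A" "a \<noteq> b" "u \<in> A" "v \<in> A"
  shows "cc (ordk A (keyf blk b a) h) u v = cc (ordk A (keyf blk a b) h) u v + dd a b u v"
proof -
  define m where "m = min (blk a) (blk b)"
  have m2: "min (blk b) (blk a) = m" by (simp add: m_def)
  have k1: "keyf blk a b z = (if z = b then 4*m+1 else if z = a then 4*m+2 else 4 * blk z)" for z
    by (simp add: keyf_def m_def)
  have k2: "keyf blk b a z = (if z = a then 4*m+1 else if z = b then 4*m+2 else 4 * blk z)" for z
    using assms(3) by (auto simp: keyf_def m2)
  have mem: "(x,y) \<in> ordk A k h \<longleftrightarrow> x \<in> A \<and> y \<in> A \<and> (k x < k y \<or> (k x = k y \<and> h x < h y))" for x y k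
    by (simp add: ordk_def)
  have ar: "(4*m+1 < 4*x \<longleftrightarrow> 4*m+2 < 4*x) \<and> (4*x < 4*m+1 \<longleftrightarrow> 4*x < 4*m+(2::nat))
       \<and> 4*m+1 \<noteq> 4*x \<and> 4*m+2 \<noteq> 4*x" for x by presburger
  have keq: "(keyf blk a b x < keyf blk a b y \<longleftrightarrow> keyf blk b a x < keyf blk b a y) \<and>
             (keyf blk a b x = keyf blk a b y \<longleftrightarrow> keyf blk b a x = keyf blk b a y)"
    if nab: "\<not> (x = a \<and> y = b)" "\<not> (x = b \<and> y = a)" for x y
  proof (cases "x = y")
    case True then show ?thesis by simp
  next
    case xy: False
    consider "x = a" "y \<noteq> b" "y \<noteq> a" | "x = b" "y \<noteq> a" "y \<noteq> b" | "y = a" "x \<noteq> b" "x \<noteq> a"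
      | "y = b" "x \<noteq> a" "x \<noteq> b" | "x \<noteq> a" "x \<noteq> b" "y \<noteq> a" "y \<noteq> b"
      using nab xy by blast
    then show ?thesis
    proof cases
      case 1 then show ?thesis using ar[of "blk y"] assms(3) by (simp add: k1 k2)
    next
      case 2 then show ?thesis using ar[of "blk y"] assms(3) by (simp add: k1 k2)
    next
      case 3 then show ?thesis using ar[of "blk x"] assms(3) by (simp add: k1 k2)
    next
      case 4 then show ?thesis using ar[of "blk x"] assms(3) by (simp add: k1 k2)
    next
      case 5 then show ?thesis by (simp add: k1 k2)
    qed
  qed
  have same: "(x,y) \<in> ordk A (keyf blk b a) h \<longleftrightarrow> (x,y) \<in> ordk A (keyf blk a b) h"
    if "\<not> (x = a \<and> y = b)" "\<not> (x = b \<and> y = a)" for x y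
    using keq[OF that] unfolding ordk_def by auto
  show ?thesis
  proof (cases "u = a \<and> v = b")
    case True
    then show ?thesis using assms unfolding cc_def dd_def ordk_def k1 k2 by auto
  next
    case F1: False
    show ?thesis
    proof (cases "u = b \<and> v = a")
      case True
      then show ?thesis using assms unfolding cc_def dd_def ordk_def k1 k2 by auto
    next
      case False
      have "\<not> (v = a \<and> u = b)" "\<not> (v = b \<and> u = a)" using F1 False by auto
      then show ?thesis using same[OF F1 False] same[of v u] F1 False
        unfolding cc_def dd_def by simp
    qed
  qed
qed



lemma dominant_nested:
  assumes "dominant A R X" "dominant A R Y"
  shows "X \<subseteq> Y \<or> Y \<subseteq> X"
proof (rule ccontr)
  assume "\<not> ?thesis"
  then obtain x y where "x \<in> X" "x \<notin> Y" "y \<in> Y" "y \<notin> X" by blast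
  moreover have "X \<subseteq> A" "Y \<subseteq> A" using assms by (auto simp: dominant_def)
  ultimately have "margin R x y > 0" "margin R y x > 0" using assms unfolding dominant_def by auto
  then show False using margin_antisym[of R y x] by simp
qed

lemma TC_props:
  assumes "finite A" "A \<noteq> {}"
  shows "dominant A R (TC A R) \<and> (\<forall>Y. dominant A R Y \<longrightarrow> TC A R \<subseteq> Y)"
proof -
  have "dominant A R A" using assms by (simp add: dominant_def)
  then obtain X where X: "dominant A R X" and mn: "\<forall>Y. dominant A R Y \<longrightarrow> card X \<le> card Y"
    using ex_has_least_nat[of "dominant A R" A card] by blast
  have P: "\<forall>Y. dominant A R Y \<longrightarrow> X \<subseteq> Y"
  proof (intro allI impI)
    fix Y assume Y: "dominant A R Y"
    show "X \<subseteq> Y"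
    proof (cases "Y \<subseteq> X")
      case True
      have "finite X" using X assms(1) finite_subset unfolding dominant_def by blast
      then have "Y = X" using True mn Y card_seteq by blast
      then show ?thesis by simp
    next
      case False
      then show ?thesis using dominant_nested[OF X Y] by blast
    qed
  qed
  have "TC A R = X"
    unfolding TC_def
  proof (rule the_equality)
    show "dominant A R X \<and> (\<forall>Y. dominant A R Y \<longrightarrow> X \<subseteq> Y)" using X P by blast
  next
    fix Z assume "dominant A R Z \<and> (\<forall>Y. dominant A R Y \<longrightarrow> Z \<subseteq> Y)"
    then show "Z = X" using X P by blast
  qed
  then show ?thesis using X P by simp
qed

lemma dd_swap: "a \<noteq> b \<Longrightarrow> dd b a u v = - dd a b u v"
  unfolding dd_def by auto

lemma tot_dec:
  assumes "finite A" "a \<in> A" "b \<in> A" "a \<noteq> b" "margin R a b \<ge> 2"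
    and mg: "\<forall>u\<in>A. \<forall>v\<in>A. margin R' u v = margin R u v + dd b a u v"
  shows "tot A R' < tot A R"
  unfolding tot_def
proof (rule sum_strict_mono_ex1)
  show "finite (A \<times> A)" using assms(1) by simp
  have ba: "margin R b a = - margin R a b" by (rule margin_antisym)
  show "\<forall>p\<in>A \<times> A. nat \<bar>margin R' (fst p) (snd p)\<bar> \<le> nat \<bar>margin R (fst p) (snd p)\<bar>"
  proof
    fix p assume p: "p \<in> A \<times> A"
    obtain u v where uv: "p = (u,v)" by (cases p)
    have "u \<in> A" "v \<in> A" using p uv by auto
    then have "margin R' u v = margin R u v + dd b a u v" using mg by simp
    then show "nat \<bar>margin R' (fst p) (snd p)\<bar> \<le> nat \<bar>margin R (fst p) (snd p)\<bar>"
      using uv assms(4,5) ba by (auto simp: dd_def)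
  qed
  have "margin R' a b = margin R a b - 2" using mg assms(2,3,4) by (simp add: dd_def)
  then show "\<exists>p\<in>A \<times> A. nat \<bar>margin R' (fst p) (snd p)\<bar> < nat \<bar>margin R (fst p) (snd p)\<bar>"
    using assms(2,3,5) by (intro bexI[of _ "(a,b)"]) auto
qed

lemma dominant_scale:
  assumes "\<forall>u v. margin R2 u v = 2 * margin R u v"
  shows "dominant A R2 X \<longleftrightarrow> dominant A R X"
  using assms unfolding dominant_def by auto

lemma div2_set: "{k::nat. k div 2 \<in> S} = (\<lambda>i. 2*i) ` S \<union> (\<lambda>i. 2*i+1) ` S"
proof
  show "{k. k div 2 \<in> S} \<subseteq> (\<lambda>i. 2*i) ` S \<union> (\<lambda>i. 2*i+1) ` S"
  proof
    fix k assume "k \<in> {k. k div 2 \<in> S}"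
    then have k: "k div 2 \<in> S" by simp
    have "k = 2 * (k div 2) \<or> k = 2 * (k div 2) + 1" by presburger
    then show "k \<in> (\<lambda>i. 2*i) ` S \<union> (\<lambda>i. 2*i+1) ` S" using k by blast
  qed
qed auto

lemma card_div2_set:
  assumes "finite S"
  shows "card {k::nat. k div 2 \<in> S} = 2 * card S"
proof -
  have d: "(\<lambda>i. 2*i) ` S \<inter> (\<lambda>i. 2*i+1) ` S = {}" by auto presburger
  have i1: "inj_on (\<lambda>i::nat. 2*i) S" by (auto simp: inj_on_def)
  have i2: "inj_on (\<lambda>i::nat. 2*i+1) S" by (auto simp: inj_on_def)
  show ?thesis unfolding div2_set
    using card_Un_disjoint[OF finite_imageI[OF assms] finite_imageI[OF assms] d]
      card_image[OF i1] card_image[OF i2] by simp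
qed

lemma double_profile:
  assumes R: "is_profile A R"
  defines "R2 \<equiv> (\<lambda>k. R (k div 2))"
  shows "is_profile A R2" "\<forall>u v. margin R2 u v = 2 * margin R u v" "copies 2 R R2"
proof -
  have dom2: "dom R2 = {k. k div 2 \<in> dom R}" unfolding R2_def by (auto simp: dom_def)
  have fin: "finite (dom R)" "dom R \<noteq> {}" "0 \<notin> dom R" using R by (auto simp: is_profile_def)
  show "is_profile A R2"
    unfolding is_profile_def
  proof (intro conjI)
    show "finite (dom R2)" unfolding dom2 div2_set using fin by simp
    show "dom R2 \<noteq> {}" unfolding dom2 div2_set using fin by simp
    show "0 \<notin> dom R2" unfolding dom2 using fin by simp
    show "\<forall>i\<in>dom R2. strict_total_order A (the (R2 i))"
      using R unfolding dom2 is_profile_def R2_def by auto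
  qed
  have pref: "{k \<in> dom R2. prefers R2 k x y} = {k. k div 2 \<in> {i \<in> dom R. prefers R i x y}}" for x y
    unfolding dom2 R2_def prefers_def by auto
  have cp: "card {k \<in> dom R2. prefers R2 k x y} = 2 * card {i \<in> dom R. prefers R i x y}" for x y
    unfolding pref by (rule card_div2_set) (use fin(1) in simp)
  show "\<forall>u v. margin R2 u v = 2 * margin R u v"
    unfolding margin_def cp by simp
  show "copies 2 R R2"
    unfolding copies_def
  proof (intro exI[of _ "\<lambda>k. k div 2"] conjI)
    show "(\<lambda>k. k div 2) ` dom R2 \<subseteq> dom R" unfolding dom2 by auto
    show "\<forall>i\<in>dom R. card {j \<in> dom R2. j div 2 = i} = 2"
    proof
      fix i assume "i \<in> dom R"
      then have "{j \<in> dom R2. j div 2 = i} = {k. k div 2 \<in> {i}}" unfolding dom2 by auto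
      then show "card {j \<in> dom R2. j div 2 = i} = 2" using card_div2_set[of "{i}"] by simp
    qed
    show "\<forall>j\<in>dom R2. R2 j = R (j div 2)" unfolding R2_def by simp
  qed
qed



locale ctx =
  fixes A :: "'a set" and f :: "'a profile \<Rightarrow> 'a set"
  assumes finA: "finite A"
    and scc: "is_SCC A f"
    and pw: "pairwise_scc A f"
    and hom: "homogeneous A f"
    and sp: "strategyproof A f"
    and tcf: "\<forall>R. is_profile A R \<longrightarrow> TC A R \<subseteq> f R"
begin

lemma fR: "is_profile A R \<Longrightarrow> f R \<noteq> {} \<and> f R \<subseteq> A"
  using scc by (simp add: is_SCC_def)

lemma pwI: "is_profile A R \<Longrightarrow> is_profile A R' \<Longrightarrow> (\<forall>x\<in>A. \<forall>y\<in>A. margin R x y = margin R' x y) \<Longrightarrow> f R = f R'"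
  using pw unfolding pairwise_scc_def by blast

lemma two_upd:
  assumes R: "is_profile A R" and s: "strict_total_order A s" and t: "strict_total_order A t"
  defines "i \<equiv> Suc (Max (dom R))"
  shows "is_profile A (R(i \<mapsto> s, Suc i \<mapsto> t))"
    "\<forall>x y. margin (R(i \<mapsto> s, Suc i \<mapsto> t)) x y = margin R x y + cc s x y + cc t x y"
    "dom (R(i \<mapsto> s, Suc i \<mapsto> t)) = insert i (insert (Suc i) (dom R))"
    "i \<in> dom (R(i \<mapsto> s, Suc i \<mapsto> t))"
proof -
  have fin: "finite (dom R)" using R by (simp add: is_profile_def)
  have i1: "i \<notin> dom R" and i2: "Suc i \<notin> dom R" using fresh[OF R] by (simp_all add: i_def)
  have P1: "is_profile A (R(i \<mapsto> s))" by (rule profile_upd[OF R i1 _ s]) (simp add: i_def)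
  have i2': "Suc i \<notin> dom (R(i \<mapsto> s))" using i2 by simp
  show "is_profile A (R(i \<mapsto> s, Suc i \<mapsto> t))" by (rule profile_upd[OF P1 i2' _ t]) simp
  have fin1: "finite (dom (R(i \<mapsto> s)))" using fin by simp
  show "\<forall>x y. margin (R(i \<mapsto> s, Suc i \<mapsto> t)) x y = margin R x y + cc s x y + cc t x y"
    using margin_upd[OF fin1 i2'] margin_upd[OF fin i1] by simp
  show "dom (R(i \<mapsto> s, Suc i \<mapsto> t)) = insert i (insert (Suc i) (dom R))" by auto
  show "i \<in> dom (R(i \<mapsto> s, Suc i \<mapsto> t))" by simp
qed

lemma shift_exists:
  assumes R: "is_profile A R" and a: "a \<in> A" and b: "b \<in> A" and ab: "a \<noteq> b"
  shows "\<exists>R'. is_profile A R' \<and> (\<forall>u\<in>A. \<forall>v\<in>A. margin R' u v = margin R u v + dd a b u v)"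
proof -
  obtain h :: "'a \<Rightarrow> nat" where h: "inj_on h A" using finite_imp_inj_to_nat_seg[OF finA] by blast
  define blk :: "'a \<Rightarrow> nat" where "blk = (\<lambda>_. 0)"
  define s where "s = ordk A (keyf blk a b) h"
  define s' where "s' = ordk A (keyf blk b a) h"
  have ss: "strict_total_order A s" "strict_total_order A s'" "strict_total_order A (s\<inverse>)"
    using sto_ordk[OF h] sto_conv unfolding s_def s'_def by blast+
  define i where "i = Suc (Max (dom R))"
  note U = two_upd[OF R ss(2) ss(3), folded i_def]
  show ?thesis
  proof (intro exI conjI)
    show "is_profile A (R(i \<mapsto> s', Suc i \<mapsto> s\<inverse>))" by (rule U(1))
    show "\<forall>u\<in>A. \<forall>v\<in>A. margin (R(i \<mapsto> s', Suc i \<mapsto> s\<inverse>)) u v = margin R u v + dd a b u v"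
      using U(2) unfolding s_def s'_def by (simp add: swap_cc[OF a b ab] cc_conv)
  qed
qed

lemma trans_types:
  assumes R: "is_profile A R" and R': "is_profile A R'" and a: "a \<in> A" and b: "b \<in> A" and ab: "a \<noteq> b"
    and mg: "\<forall>u\<in>A. \<forall>v\<in>A. margin R' u v = margin R u v + dd a b u v"
  shows "f R = f R' \<or> (a \<in> f R' - f R \<and> b \<in> f R \<inter> f R') \<or> (a \<in> f R' - f R \<and> b \<in> f R - f R')
    \<or> (a \<in> f R \<inter> f R' \<and> b \<in> f R - f R') \<or> (a \<in> f R - f R' \<and> b \<in> f R' - f R \<and> f R \<inter> f R' \<noteq> {})"
proof (rule ccontr)
  assume nt: "\<not> ?thesis"
  define X where "X = f R"
  define Y where "Y = f R'"
  have XA: "X \<subseteq> A" "Y \<subseteq> A" using fR R R' unfolding X_def Y_def by blast+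
  define blk :: "'a \<Rightarrow> nat" where
    "blk z = (if z \<in> Y - X then 0 else if z \<in> X \<inter> Y then 1 else if z \<in> X - Y then 2 else 3)" for z
  obtain h :: "'a \<Rightarrow> nat" where h: "inj_on h A" using finite_imp_inj_to_nat_seg[OF finA] by blast
  define s where "s = ordk A (keyf blk a b) h"
  define s' where "s' = ordk A (keyf blk b a) h"
  have ss: "strict_total_order A s" "strict_total_order A s'" "strict_total_order A (s\<inverse>)"
    using sto_ordk[OF h] sto_conv unfolding s_def s'_def by blast+
  define i where "i = Suc (Max (dom R))"
  define S where "S = R(i \<mapsto> s, Suc i \<mapsto> s\<inverse>)"
  define S' where "S' = R(i \<mapsto> s', Suc i \<mapsto> s\<inverse>)"
  note U = two_upd[OF R ss(1) ss(3), folded i_def S_def]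
  note U' = two_upd[OF R ss(2) ss(3), folded i_def S'_def]
  have fS: "f S = X" unfolding X_def
    using pwI[of S R] U(1) R U(2) by (simp add: cc_conv S_def)
  have m': "\<forall>x\<in>A. \<forall>y\<in>A. margin S' x y = margin R' x y"
  proof (intro ballI)
    fix x y assume x: "x \<in> A" and y: "y \<in> A"
    have "margin S' x y = margin R x y + cc s' x y + cc (s\<inverse>) x y" using U'(2) by (simp add: S'_def)
    also have "\<dots> = margin R x y + dd a b x y"
      using swap_cc[OF a b ab x y, of blk h] unfolding s_def s'_def cc_conv by simp
    also have "\<dots> = margin R' x y" using mg x y by simp
    finally show "margin S' x y = margin R' x y" .
  qed
  have pS': "is_profile A S'" using U'(1) by (simp add: S'_def)
  have fS': "f S' = Y" unfolding Y_def by (rule pwI[OF pS' R' m'])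
  have nf: "\<not> fishburn S i (f S') (f S)"
  proof -
    have "dom S' = dom S" using U(3) U'(3) by (simp add: S_def S'_def)
    moreover have "\<forall>j. j \<noteq> i \<longrightarrow> S' j = S j" unfolding S_def S'_def by simp
    moreover have "is_profile A S" "is_profile A S'" "i \<in> dom S" using U(1) U'(1) U(4) by (simp_all add: S_def S'_def)
    ultimately show ?thesis using sp unfolding strategyproof_def by blast
  qed
  have Si: "S i = Some s" unfolding S_def by simp
  have n0: "X \<noteq> Y" and n1: "\<not> (a \<in> Y - X \<and> b \<in> X \<inter> Y)" and n2: "\<not> (a \<in> Y - X \<and> b \<in> X - Y)"
    and n3: "\<not> (a \<in> X \<inter> Y \<and> b \<in> X - Y)" and n4: "\<not> (a \<in> X - Y \<and> b \<in> Y - X \<and> X \<inter> Y \<noteq> {})"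
    using nt unfolding X_def Y_def by blast+
  have b0: "blk z = 0 \<longleftrightarrow> z \<in> Y - X" for z unfolding blk_def by simp
  have b1: "blk z = 1 \<longleftrightarrow> z \<in> X \<inter> Y" for z unfolding blk_def by auto
  have b2: "blk z = 2 \<longleftrightarrow> z \<in> X - Y" for z unfolding blk_def by auto
  have b3: "blk z \<le> 3" for z unfolding blk_def by simp
  have f1: "\<not> (blk a < blk b \<and> blk b \<le> 2)"
  proof
    assume "blk a < blk b \<and> blk b \<le> 2"
    then have "(blk a = 0 \<and> blk b = 1) \<or> (blk a = 0 \<and> blk b = 2) \<or> (blk a = 1 \<and> blk b = 2)" by linarith
    then show False using n1 n2 n3 unfolding b0 b1 b2 by blast
  qed
  have f2: "\<not> (blk b = 0 \<and> blk a = 2 \<and> blk z = 1)" for z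
    using n4 unfolding b0 b1 b2 by blast
  define m where "m = min (blk a) (blk b)"
  have k1: "keyf blk a b z = (if z = b then 4*m+1 else if z = a then 4*m+2 else 4 * blk z)" for z
    by (simp add: keyf_def m_def)
  have key: "(y,x) \<in> s" if y: "y \<in> A" and x: "x \<in> A" and lt: "blk y < blk x" and x2: "blk x \<le> 2" for y x
  proof -
    have "keyf blk a b y < keyf blk a b x"
    proof (cases "y = b")
      case yb: True
      then show ?thesis
      proof (cases "x = a")
        case True then show ?thesis using yb ab by (simp add: k1)
      next
        case False
        have "x \<noteq> b" using lt yb by auto
        moreover have "m < blk x" using lt yb unfolding m_def by simp
        ultimately show ?thesis using yb False by (simp add: k1)
      qed
    next
      case ynb: False
      show ?thesis
      proof (cases "y = a")
        case ya: True
        show ?thesis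
        proof (cases "x = b")
          case True then show ?thesis using f1 lt x2 ya by simp
        next
          case False
          have "x \<noteq> a" using lt ya by auto
          moreover have "m < blk x" using lt ya unfolding m_def by simp
          ultimately show ?thesis using ya False ab by (simp add: k1)
        qed
      next
        case yna: False
        show ?thesis
        proof (cases "x = b")
          case xb: True
          have "blk b \<le> blk a" using f1 lt x2 xb by auto
          then have "blk y \<le> m" using lt xb unfolding m_def by simp
          then show ?thesis using xb ynb yna by (simp add: k1)
        next
          case xnb: False
          show ?thesis
          proof (cases "x = a")
            case xa: True
            have "blk y \<le> blk b"
            proof (rule ccontr)
              assume "\<not> blk y \<le> blk b"
              then have "blk b = 0" "blk y = 1" "blk a = 2" using lt x2 xa by auto
              then show False using f2 by blast
            qed
            then have "blk y \<le> m" using lt xa unfolding m_def by simp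
            then show ?thesis using xa ynb yna ab by (simp add: k1)
          next
            case False
            then show ?thesis using xnb ynb yna lt by (simp add: k1)
          qed
        qed
      qed
    qed
    then show ?thesis unfolding s_def ordk_def using x y by simp
  qed
  have "fishburn S i Y X"
    unfolding fishburn_def
  proof (intro conjI ballI)
    show "Y \<noteq> X" using n0 by auto
  next
    fix y x assume "y \<in> Y - X" "x \<in> X"
    moreover have "blk x = 1 \<or> blk x = 2" using \<open>x \<in> X\<close> unfolding b1 b2 by blast
    ultimately have "blk y = 0" "blk x \<noteq> 0" "blk x \<le> 2" unfolding b0 by auto
    moreover have "y \<in> A" "x \<in> A" using \<open>y \<in> Y - X\<close> \<open>x \<in> X\<close> XA by auto
    ultimately have "(y,x) \<in> s" using key[of y x] by simp
    then show "prefers S i y x" using Si by (simp add: prefers_def)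
  next
    fix y x assume "y \<in> Y" "x \<in> X - Y"
    have "blk x = 2" using \<open>x \<in> X - Y\<close> b2 by blast
    moreover have "blk y = 0 \<or> blk y = 1" using \<open>y \<in> Y\<close> b0 b1 by (cases "y \<in> X") auto
    ultimately have "blk y \<le> 1" "blk x = 2" by auto
    moreover have "y \<in> A" "x \<in> A" using \<open>y \<in> Y\<close> \<open>x \<in> X - Y\<close> XA by auto
    ultimately have "(y,x) \<in> s" using key[of y x] by simp
    then show "prefers S i y x" using Si by (simp add: prefers_def)
  qed
  then show False using nf fS fS' by simp
qed

end


context ctx begin

lemma double_exists:
  assumes R: "is_profile A R"
  shows "\<exists>R2. is_profile A R2 \<and> (\<forall>u v. margin R2 u v = 2 * margin R u v) \<and> f R2 = f R"
proof -
  note D = double_profile[OF R]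
  have "f (\<lambda>k. R (k div 2)) = f R"
    using hom D(1) D(3) R unfolding homogeneous_def by (metis one_le_numeral)
  then show ?thesis using D by blast
qed

lemma pow_exists:
  assumes R: "is_profile A R"
  shows "\<exists>H. is_profile A H \<and> (\<forall>u v. margin H u v = 2^n * margin R u v) \<and> f H = f R"
proof (induction n)
  case 0
  then show ?case using R by (intro exI[of _ R]) simp
next
  case (Suc n)
  then obtain H where H: "is_profile A H" "\<forall>u v. margin H u v = 2^n * margin R u v" "f H = f R" by blast
  obtain H2 where "is_profile A H2" "\<forall>u v. margin H2 u v = 2 * margin H u v" "f H2 = f H"
    using double_exists[OF H(1)] by blast
  then show ?case using H by (intro exI[of _ H2]) simp
qed

lemma even_pos: "even (m::int) \<Longrightarrow> 0 < m \<Longrightarrow> 2 \<le> m"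
  by presburger

lemma dom_even:
  assumes "is_profile A R" "\<forall>x\<in>A. \<forall>y\<in>A. even (margin R x y)"
  shows "dominant A R (f R)"
  using assms
proof (induction "tot A R" arbitrary: R rule: less_induct)
  case less
  have R: "is_profile A R" and ev: "\<forall>x\<in>A. \<forall>y\<in>A. even (margin R x y)" using less.prems by auto
  define X where "X = f R"
  have XA: "X \<noteq> {}" "X \<subseteq> A" using fR[OF R] X_def by auto
  show ?case
  proof (rule ccontr)
    assume nd: "\<not> dominant A R (f R)"
    then obtain x y where x: "x \<in> X" and y: "y \<in> A" "y \<notin> X" and mxy: "margin R x y \<le> 0"
      using XA unfolding dominant_def X_def by force
    have Ane: "A \<noteq> {}" using XA by blast
    define T where "T = TC A R"
    have Td: "dominant A R T" using TC_props[OF finA Ane] T_def by blast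
    have TX: "T \<subseteq> X" using tcf R T_def X_def by blast
    have xT: "x \<notin> T"
    proof
      assume "x \<in> T"
      moreover have "y \<in> A - T" using y TX by blast
      ultimately have "margin R x y > 0" using Td unfolding dominant_def by blast
      then show False using mxy by simp
    qed
    obtain w where wT: "w \<in> T" using Td unfolding dominant_def by blast
    have xA: "x \<in> A" using x XA by blast
    have wA: "w \<in> A" and wX: "w \<in> X" using wT TX XA by auto
    have wx: "w \<noteq> x" using wT xT by blast
    have "margin R w x > 0" using Td wT xT xA unfolding dominant_def by blast
    then have m2: "margin R w x \<ge> 2" using even_pos ev wA xA by blast
    obtain Rp where Rp: "is_profile A Rp" and mRp: "\<forall>u\<in>A. \<forall>v\<in>A. margin Rp u v = margin R u v + dd x w u v"
      using shift_exists[OF R xA wA wx[symmetric]] by blast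
    have evp: "\<forall>u\<in>A. \<forall>v\<in>A. even (margin Rp u v)"
      using mRp ev by (simp add: dd_def)
    have "tot A Rp < tot A R" by (rule tot_dec[OF finA wA xA wx m2 mRp])
    then have Dp: "dominant A Rp (f Rp)" using less.hyps Rp evp by blast
    have mR: "\<forall>u\<in>A. \<forall>v\<in>A. margin R u v = margin Rp u v + dd w x u v"
      using mRp dd_swap[OF wx, of _ _] by simp
    note TT = trans_types[OF Rp R wA xA wx mR]
    have yw: "y \<noteq> w" using y wX by blast
    have "f Rp \<noteq> f R"
    proof
      assume eq: "f Rp = f R"
      have "margin Rp x y = margin R x y" using mRp xA y(1) yw by (simp add: dd_def)
      moreover have "margin Rp x y > 0" using Dp eq x y X_def unfolding dominant_def by blast
      ultimately show False using mxy by simp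
    qed
    then have "x \<in> f Rp \<and> w \<notin> f Rp" using TT x wX X_def by blast
    then have "margin Rp x w > 0" using Dp wA unfolding dominant_def by blast
    moreover have "margin Rp x w = margin R x w + 2" using mRp xA wA by (simp add: dd_def)
    moreover have "margin R x w = - margin R w x" by (rule margin_antisym)
    ultimately show False using m2 by simp
  qed
qed

lemma dom_all:
  assumes R: "is_profile A R"
  shows "dominant A R (f R)"
proof -
  obtain R2 where R2: "is_profile A R2" "\<forall>u v. margin R2 u v = 2 * margin R u v" "f R2 = f R"
    using double_exists[OF R] by blast
  have "dominant A R2 (f R2)" by (rule dom_even[OF R2(1)]) (simp add: R2(2))
  then show ?thesis using dominant_scale[OF R2(2)] R2(3) by simp
qed

end


definition cross_gap :: "'a set \<Rightarrow> 'a set \<Rightarrow> 'a profile \<Rightarrow> 'a profile \<Rightarrow> nat" where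
  "cross_gap A X G g = (\<Sum>p\<in>X \<times> (A - X). nat (margin G (fst p) (snd p) - margin g (fst p) (snd p)))"

lemma even_ge4: "even (m::int) \<Longrightarrow> 2 \<le> m \<Longrightarrow> m \<noteq> 2 \<Longrightarrow> 4 \<le> m"
  by presburger

lemma zero_margins:
  assumes ev: "\<forall>x\<in>A. \<forall>y\<in>A. even (margin R x y)"
    and cond: "\<forall>a\<in>A. \<forall>b\<in>A. a \<noteq> b \<longrightarrow> 2 \<le> margin R a b \<longrightarrow> (a \<in> X \<and> b \<notin> X)"
  shows "\<forall>u\<in>A. \<forall>v\<in>A. (u \<in> X \<longleftrightarrow> v \<in> X) \<longrightarrow> margin R u v = 0"
proof (intro ballI impI)
  fix u v assume u: "u \<in> A" and v: "v \<in> A" and s: "u \<in> X \<longleftrightarrow> v \<in> X"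
  show "margin R u v = 0"
  proof (cases "u = v")
    case True
    then show ?thesis using margin_antisym[of R u u] by simp
  next
    case False
    have a: "margin R v u = - margin R u v" by (rule margin_antisym)
    show ?thesis
    proof (rule ccontr)
      assume nz: "margin R u v \<noteq> 0"
      show False
      proof (cases "margin R u v > 0")
        case True
        moreover have "even (margin R u v)" using ev u v by blast
        ultimately have "2 \<le> margin R u v" by presburger
        then show False using cond u v False s by blast
      next
        case F2: False
        then have "margin R v u > 0" using nz a by simp
        moreover have "even (margin R v u)" using ev u v by blast
        ultimately have "2 \<le> margin R v u" by presburger
        then show False using cond[rule_format, of v u] u v False s by auto
      qed
    qed
  qed
qed

lemma margin_le_tot:
  assumes "finite A" "u \<in> A" "v \<in> A"
  shows "\<bar>margin R u v\<bar> \<le> int (tot A R)"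
proof -
  have "nat \<bar>margin R u v\<bar> \<le> tot A R"
    unfolding tot_def
    using member_le_sum[of "(u,v)" "A \<times> A" "\<lambda>p. nat \<bar>margin R (fst p) (snd p)\<bar>"] assms by simp
  then show ?thesis by simp
qed

context ctx begin

lemma mono_path:
  assumes G: "is_profile A G" and evG: "\<forall>x\<in>A. \<forall>y\<in>A. even (margin G x y)"
  shows "is_profile A g \<Longrightarrow> \<forall>x\<in>A. \<forall>y\<in>A. even (margin g x y) \<Longrightarrow>
    \<forall>u\<in>A. \<forall>v\<in>A. (u \<in> f g \<longleftrightarrow> v \<in> f g) \<longrightarrow> margin G u v = margin g u v \<Longrightarrow>
    \<forall>u\<in>f g. \<forall>v\<in>A - f g. margin g u v \<le> margin G u v \<Longrightarrow> f G = f g"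
proof (induction "cross_gap A (f g) G g" arbitrary: g rule: less_induct)
  case less
  have g: "is_profile A g" and evg: "\<forall>x\<in>A. \<forall>y\<in>A. even (margin g x y)"
    and same: "\<forall>u\<in>A. \<forall>v\<in>A. (u \<in> f g \<longleftrightarrow> v \<in> f g) \<longrightarrow> margin G u v = margin g u v"
    and cross: "\<forall>u\<in>f g. \<forall>v\<in>A - f g. margin g u v \<le> margin G u v" using less.prems by auto
  define X where "X = f g"
  have XA: "X \<subseteq> A" using fR g X_def by blast
  have Dg: "dominant A g X" using dom_all g X_def by simp
  show ?case
  proof (cases "\<forall>u\<in>X. \<forall>v\<in>A - X. margin G u v = margin g u v")
    case True
    have "\<forall>x\<in>A. \<forall>y\<in>A. margin G x y = margin g x y"
    proof (intro ballI)
      fix x y assume x: "x \<in> A" and y: "y \<in> A"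
      consider "x \<in> X \<longleftrightarrow> y \<in> X" | "x \<in> X" "y \<notin> X" | "x \<notin> X" "y \<in> X" by blast
      then show "margin G x y = margin g x y"
      proof cases
        case 1 then show ?thesis using same x y X_def by blast
      next
        case 2 then show ?thesis using True y by blast
      next
        case 3 then have "margin G y x = margin g y x" using True x by blast
        then show ?thesis using margin_antisym[of G x y] margin_antisym[of g x y] by simp
      qed
    qed
    then show ?thesis using pwI[OF G g] X_def by simp
  next
    case False
    then obtain a b where a: "a \<in> X" and b: "b \<in> A" "b \<notin> X" and ne: "margin G a b \<noteq> margin g a b" by blast
    have aA: "a \<in> A" using a XA by blast
    have ab: "a \<noteq> b" using a b by blast
    have le: "margin g a b \<le> margin G a b" using cross a b X_def by blast
    have "even (margin G a b - margin g a b)" using evG evg aA b by simp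
    then have le2: "margin g a b + 2 \<le> margin G a b"
      using le ne even_pos[of "margin G a b - margin g a b"] by simp
    obtain g' where g': "is_profile A g'" and mg': "\<forall>u\<in>A. \<forall>v\<in>A. margin g' u v = margin g u v + dd a b u v"
      using shift_exists[OF g aA b(1) ab] by blast
    have evg': "\<forall>x\<in>A. \<forall>y\<in>A. even (margin g' x y)" using mg' evg by (simp add: dd_def)
    have Dg': "dominant A g' X"
      unfolding dominant_def
    proof (intro conjI ballI)
      show "X \<noteq> {}" "X \<subseteq> A" using Dg unfolding dominant_def by auto
    next
      fix x y assume x: "x \<in> X" and y: "y \<in> A - X"
      have "margin g x y > 0" using Dg x y unfolding dominant_def by blast
      moreover have "x \<noteq> b" using x b by blast
      moreover have "margin g' x y = margin g x y + dd a b x y" using mg' x y XA by blast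
      ultimately show "margin g' x y > 0" by (auto simp: dd_def)
    qed
    have fg': "f g' = X"
    proof (rule ccontr)
      assume nX: "f g' \<noteq> X"
      have "a \<in> X - f g' \<and> b \<in> f g' - X"
        using trans_types[OF g g' aA b(1) ab mg'] nX a b X_def by blast
      moreover have "X \<subseteq> f g' \<or> f g' \<subseteq> X" using dominant_nested[OF Dg' dom_all[OF g']] .
      ultimately show False by blast
    qed
    have same': "\<forall>u\<in>A. \<forall>v\<in>A. (u \<in> f g' \<longleftrightarrow> v \<in> f g') \<longrightarrow> margin G u v = margin g' u v"
    proof (intro ballI impI)
      fix u v assume u: "u \<in> A" and v: "v \<in> A" and s: "u \<in> f g' \<longleftrightarrow> v \<in> f g'"
      have "dd a b u v = 0" using s fg' a b by (auto simp: dd_def)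
      then show "margin G u v = margin g' u v" using same u v s fg' mg' X_def by simp
    qed
    have cross': "\<forall>u\<in>f g'. \<forall>v\<in>A - f g'. margin g' u v \<le> margin G u v"
    proof (intro ballI)
      fix u v assume u: "u \<in> f g'" and v: "v \<in> A - f g'"
      have uA: "u \<in> A" using u fg' XA by blast
      have e: "margin g' u v = margin g u v + dd a b u v" using mg' uA v by blast
      show "margin g' u v \<le> margin G u v"
      proof (cases "u = a \<and> v = b")
        case True then show ?thesis using e le2 by (simp add: dd_def)
      next
        case False
        have "u \<noteq> b" using u fg' b by blast
        then have "dd a b u v = 0" using False by (auto simp: dd_def)
        then show ?thesis using e cross u v fg' X_def by simp
      qed
    qed
    have "cross_gap A (f g') G g' < cross_gap A (f g) G g"
      unfolding cross_gap_def fg' X_def[symmetric]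
    proof (rule sum_strict_mono_ex1)
      show "finite (X \<times> (A - X))" using finA XA finite_subset by blast
      show "\<forall>p\<in>X \<times> (A - X). nat (margin G (fst p) (snd p) - margin g' (fst p) (snd p))
            \<le> nat (margin G (fst p) (snd p) - margin g (fst p) (snd p))"
      proof
        fix p assume p: "p \<in> X \<times> (A - X)"
        obtain u v where uv: "p = (u,v)" by (cases p)
        have uA: "u \<in> A" "v \<in> A" "u \<in> X" "v \<notin> X" using p uv XA by auto
        have "margin g' u v = margin g u v + dd a b u v" using mg' uA by blast
        moreover have "dd a b u v \<ge> 0" using uA b by (auto simp: dd_def)
        ultimately show "nat (margin G (fst p) (snd p) - margin g' (fst p) (snd p))
            \<le> nat (margin G (fst p) (snd p) - margin g (fst p) (snd p))" using uv by simp
      qed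
      have "margin g' a b = margin g a b + 2" using mg' aA b ab by (simp add: dd_def)
      then show "\<exists>p\<in>X \<times> (A - X). nat (margin G (fst p) (snd p) - margin g' (fst p) (snd p))
            < nat (margin G (fst p) (snd p) - margin g (fst p) (snd p))"
        using a b le2 by (intro bexI[of _ "(a,b)"]) auto
    qed
    then have "f G = f g'" using less.hyps g' evg' same' cross' by blast
    then show ?thesis using fg' X_def by simp
  qed
qed

end


context ctx begin

lemma rob_even:
  "is_profile A g \<Longrightarrow> \<forall>x\<in>A. \<forall>y\<in>A. even (margin g x y) \<Longrightarrow>
   is_profile A h \<Longrightarrow> \<forall>x\<in>A. \<forall>y\<in>A. even (margin h x y) \<Longrightarrow>
   dominant A h (f g) \<Longrightarrow> f h \<subseteq> f g"
proof (induction "tot A g + tot A h" arbitrary: g h rule: less_induct)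
  case less
  have g: "is_profile A g" and evg: "\<forall>x\<in>A. \<forall>y\<in>A. even (margin g x y)"
    and h: "is_profile A h" and evh: "\<forall>x\<in>A. \<forall>y\<in>A. even (margin h x y)"
    and Dh: "dominant A h (f g)" using less.prems by auto
  define X where "X = f g"
  define Z where "Z = f h"
  have XA: "X \<subseteq> A" using fR g X_def by blast
  have DhX: "dominant A h X" using Dh X_def by simp
  show ?case
  proof (cases "\<exists>a\<in>A. \<exists>b\<in>A. a \<noteq> b \<and> 2 \<le> margin h a b \<and> \<not> (a \<in> X \<and> b \<notin> X \<and> margin h a b = 2)")
    case True
    then obtain a b where aA: "a \<in> A" and bA: "b \<in> A" and ab: "a \<noteq> b" and m2: "2 \<le> margin h a b"
      and nc: "\<not> (a \<in> X \<and> b \<notin> X \<and> margin h a b = 2)" by blast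
    obtain hp where hp: "is_profile A hp" and mhp: "\<forall>u\<in>A. \<forall>v\<in>A. margin hp u v = margin h u v + dd b a u v"
      using shift_exists[OF h bA aA ab[symmetric]] by blast
    have evhp: "\<forall>x\<in>A. \<forall>y\<in>A. even (margin hp x y)" using mhp evh by (simp add: dd_def)
    have tl: "tot A hp < tot A h" by (rule tot_dec[OF finA aA bA ab m2 mhp])
    have Dhp: "dominant A hp X"
      unfolding dominant_def
    proof (intro conjI ballI)
      show "X \<noteq> {}" "X \<subseteq> A" using DhX unfolding dominant_def by auto
    next
      fix x y assume x: "x \<in> X" and y: "y \<in> A - X"
      have pos: "margin h x y > 0" using DhX x y unfolding dominant_def by blast
      have e: "margin hp x y = margin h x y + dd b a x y" using mhp x y XA by blast
      show "margin hp x y > 0"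
      proof (cases "x = a \<and> y = b")
        case True
        then have "margin h a b \<noteq> 2" using nc x y by auto
        moreover have "even (margin h a b)" using evh aA bA by blast
        ultimately have "4 \<le> margin h a b" using even_ge4 m2 by blast
        then show ?thesis using e True ab by (simp add: dd_def)
      next
        case False
        then have "dd b a x y \<ge> 0" by (auto simp: dd_def)
        then show ?thesis using e pos by simp
      qed
    qed
    have lt1: "tot A g + tot A hp < tot A g + tot A h" using tl by simp
    have sub: "f hp \<subseteq> X"
      using less.hyps[OF lt1 g evg hp evhp] Dhp unfolding X_def by blast
    have DZ: "dominant A h Z" using dom_all h Z_def by simp
    show ?thesis
    proof (cases "Z \<subseteq> X")
      case True then show ?thesis using X_def Z_def by simp
    next
      case False
      then have XZ: "X \<subseteq> Z" using dominant_nested[OF DhX DZ] by blast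
      have mh: "\<forall>u\<in>A. \<forall>v\<in>A. margin h u v = margin hp u v + dd a b u v"
        using mhp dd_swap[OF ab] by simp
      have ZZ: "f hp \<subseteq> Z" "f hp \<noteq> Z" using sub XZ False by auto
      have "b \<in> f hp \<and> a \<notin> f hp"
        using trans_types[OF hp h aA bA ab mh] unfolding Z_def[symmetric]
      proof (elim disjE)
        assume "f hp = Z" then show ?thesis using ZZ by blast
      next
        assume "a \<in> Z - f hp \<and> b \<in> f hp \<inter> Z" then show ?thesis by blast
      next
        assume "a \<in> Z - f hp \<and> b \<in> f hp - Z" then show ?thesis using ZZ by blast
      next
        assume "a \<in> f hp \<inter> Z \<and> b \<in> f hp - Z" then show ?thesis using ZZ by blast
      next
        assume "a \<in> f hp - Z \<and> b \<in> Z - f hp \<and> f hp \<inter> Z \<noteq> {}" then show ?thesis using ZZ by blast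
      qed
      then have "margin hp b a > 0" using dom_all[OF hp] aA unfolding dominant_def by blast
      moreover have "margin hp b a = margin h b a + 2" using mhp aA bA ab by (simp add: dd_def)
      moreover have "margin h b a = - margin h a b" by (rule margin_antisym)
      ultimately show ?thesis using m2 by simp
    qed
  next
    case False
    note F1 = False
    then have hcond: "\<forall>a\<in>A. \<forall>b\<in>A. a \<noteq> b \<longrightarrow> 2 \<le> margin h a b \<longrightarrow> (a \<in> X \<and> b \<notin> X \<and> margin h a b = 2)"
      by blast
    show ?thesis
    proof (cases "\<exists>a\<in>A. \<exists>b\<in>A. a \<noteq> b \<and> 2 \<le> margin g a b \<and> \<not> (a \<in> X \<and> b \<notin> X)")
      case True
      then obtain a b where aA: "a \<in> A" and bA: "b \<in> A" and ab: "a \<noteq> b" and m2: "2 \<le> margin g a b"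
        and nc: "\<not> (a \<in> X \<and> b \<notin> X)" by blast
      obtain gp where gp: "is_profile A gp" and mgp: "\<forall>u\<in>A. \<forall>v\<in>A. margin gp u v = margin g u v + dd b a u v"
        using shift_exists[OF g bA aA ab[symmetric]] by blast
      have evgp: "\<forall>x\<in>A. \<forall>y\<in>A. even (margin gp x y)" using mgp evg by (simp add: dd_def)
      have tl: "tot A gp < tot A g" by (rule tot_dec[OF finA aA bA ab m2 mgp])
      have Dg: "dominant A g X" using dom_all g X_def by simp
      have Dgp: "dominant A gp (f gp)" using dom_all gp by simp
      have DgpX: "dominant A gp X"
        unfolding dominant_def
      proof (intro conjI ballI)
        show "X \<noteq> {}" "X \<subseteq> A" using Dg unfolding dominant_def by auto
      next
        fix x y assume x: "x \<in> X" and y: "y \<in> A - X"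
        have pos: "margin g x y > 0" using Dg x y unfolding dominant_def by blast
        have e: "margin gp x y = margin g x y + dd b a x y" using mgp x y XA by blast
        have "\<not> (x = a \<and> y = b)" using nc x y by blast
        then have "dd b a x y \<ge> 0" by (auto simp: dd_def)
        then show "margin gp x y > 0" using e pos by simp
      qed
      have mg: "\<forall>u\<in>A. \<forall>v\<in>A. margin g u v = margin gp u v + dd a b u v"
        using mgp dd_swap[OF ab] by simp
      have mba: "margin gp b a = margin g b a + 2" using mgp aA bA ab by (simp add: dd_def)
      have aba: "margin g b a = - margin g a b" by (rule margin_antisym)
      have eqX: "f gp = X"
      proof (rule ccontr)
        assume nX: "f gp \<noteq> X"
        note TT = trans_types[OF gp g aA bA ab mg]
        have TT': "f gp = X \<or> (a \<in> X - f gp \<and> b \<in> f gp \<inter> X) \<or> (a \<in> X - f gp \<and> b \<in> f gp - X)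
          \<or> (a \<in> f gp \<inter> X \<and> b \<in> f gp - X) \<or> (a \<in> f gp - X \<and> b \<in> X - f gp \<and> f gp \<inter> X \<noteq> {})"
          using TT unfolding X_def .
        consider (ab1) "b \<in> f gp" "a \<notin> f gp" | (c) "a \<in> X" "b \<notin> X" | (d) "a \<in> f gp - X" "b \<in> X - f gp"
          using TT' nX
        proof (elim disjE)
        qed blast+
        then show False
        proof cases
          case ab1
          then have "margin gp b a > 0" using Dgp aA unfolding dominant_def by blast
          then show False using mba aba m2 by simp
        next
          case c then show False using nc by blast
        next
          case d then show False using dominant_nested[OF Dgp DgpX] by blast
        qed
      qed
      have lt2: "tot A gp + tot A h < tot A g + tot A h" using tl by simp
      have "f h \<subseteq> f gp"
        using less.hyps[OF lt2 gp evgp h evh] Dh eqX unfolding X_def by simp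
      then show ?thesis using eqX X_def by simp
    next
      case False
      then have gcond: "\<forall>a\<in>A. \<forall>b\<in>A. a \<noteq> b \<longrightarrow> 2 \<le> margin g a b \<longrightarrow> (a \<in> X \<and> b \<notin> X)" by blast
      have gz: "\<forall>u\<in>A. \<forall>v\<in>A. (u \<in> X \<longleftrightarrow> v \<in> X) \<longrightarrow> margin g u v = 0"
        by (rule zero_margins[OF evg gcond])
      have hz: "\<forall>u\<in>A. \<forall>v\<in>A. (u \<in> X \<longleftrightarrow> v \<in> X) \<longrightarrow> margin h u v = 0"
        by (rule zero_margins[OF evh]) (use hcond in blast)
      have hc: "\<forall>u\<in>X. \<forall>v\<in>A - X. margin h u v = 2"
      proof (intro ballI)
        fix u v assume u: "u \<in> X" and v: "v \<in> A - X"
        have "margin h u v > 0" using DhX u v unfolding dominant_def by blast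
        moreover have "even (margin h u v)" using evh u v XA by blast
        ultimately have "2 \<le> margin h u v" using even_pos by blast
        then show "margin h u v = 2" using hcond[rule_format, of u v] u v XA by auto
      qed
      define n where "n = tot A g"
      obtain H where H: "is_profile A H" "\<forall>u v. margin H u v = 2^n * margin h u v" "f H = f h"
        using pow_exists[OF h] by blast
      have evH: "\<forall>x\<in>A. \<forall>y\<in>A. even (margin H x y)" using H(2) evh by simp
      have same: "\<forall>u\<in>A. \<forall>v\<in>A. (u \<in> f g \<longleftrightarrow> v \<in> f g) \<longrightarrow> margin H u v = margin g u v"
      proof (intro ballI impI)
        fix u v assume u: "u \<in> A" and v: "v \<in> A" and s: "u \<in> f g \<longleftrightarrow> v \<in> f g"
        have "margin g u v = 0" using gz u v s unfolding X_def by blast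
        moreover have "margin h u v = 0" using hz u v s unfolding X_def by blast
        ultimately show "margin H u v = margin g u v" using H(2) by simp
      qed
      have cross: "\<forall>u\<in>f g. \<forall>v\<in>A - f g. margin g u v \<le> margin H u v"
      proof (intro ballI)
        fix u v assume u: "u \<in> f g" and v: "v \<in> A - f g"
        have uA: "u \<in> A" using u XA X_def by blast
        have "margin g u v \<le> int (tot A g)" using margin_le_tot[OF finA uA, of v g] v by simp
        also have "\<dots> < 2^n"
        proof -
          have "int (tot A g) < int (2 ^ tot A g)" using less_exp by (simp only: of_nat_less_iff)
          then show ?thesis unfolding n_def by simp
        qed
        also have "\<dots> \<le> 2^n * 2" by simp
        also have "\<dots> = margin H u v" using H(2) hc u v X_def by simp
        finally show "margin g u v \<le> margin H u v" by simp
      qed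
      have "f H = f g" by (rule mono_path[OF H(1) evH g evg same cross])
      then show ?thesis using H(3) by simp
    qed
  qed
qed

end

theorem lemma6:
  fixes A :: "'a set" and f :: "'a profile \<Rightarrow> 'a set"
  assumes "finite A"
    and "is_SCC A f"
    and "pairwise_scc A f"
    and "strongly_condorcet_consistent A f"
    and "homogeneous A f"
    and "strategyproof A f"
    and "\<forall>R. is_profile A R \<longrightarrow> TC A R \<subseteq> f R"
  shows "dominant_set_rule A f \<and> robust A f"
proof -
  interpret ctx A f by unfold_locales (use assms in auto)
  have D: "dominant_set_rule A f" unfolding dominant_set_rule_def using dom_all by blast
  have Rb: "robust A f" unfolding robust_def
  proof (intro allI impI)
    fix R R' assume R: "is_profile A R" and R': "is_profile A R'" and d: "dominant A R' (f R)"
    obtain R2 where R2: "is_profile A R2" "\<forall>u v. margin R2 u v = 2 * margin R u v" "f R2 = f R"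
      using double_exists[OF R] by blast
    obtain R2' where R2': "is_profile A R2'" "\<forall>u v. margin R2' u v = 2 * margin R' u v" "f R2' = f R'"
      using double_exists[OF R'] by blast
    have dR: "dominant A R2' (f R2)" using dominant_scale[OF R2'(2)] d R2(3) by simp
    have "f R2' \<subseteq> f R2" using rob_even[OF R2(1) _ R2'(1) _ dR] R2(2) R2'(2) by simp
    then show "f R' \<subseteq> f R" using R2(3) R2'(3) by simp
  qed
  show ?thesis using D Rb by simp
qed


end
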